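(* Let $(M,\le)$ be a finite modular lattice and $Q$ a saturated cover on $M$. If $x\le y\le w\le z$ in $M$ and $x\,\langle Q\rangle\,z$, then $y\,\langle Q\rangle\,w$.
   Context: A lattice $M$ is modular if $a\le b$ implies $a\vee(x\wedge b)=(a\vee x)\wedge b$. A transfer system on a finite lattice $(P,\le)$ is a partial order $R$ refining $\le$ closed under restriction: $x\,R\,z$ and $y\le z$ imply $(x\wedge y)\,R\,y$. For a set $Q$ of pairs $(x,y)$ with $x\le y$, $\langle Q\rangle$ is the intersection of all transfer systems containing $Q$. A covering diamond is a quadruple $x,y,x\wedge y,x\vee y$ with $x\ne y$ such that $x\vee y$ covers $x$ and $y$ and both cover $x\wedge y$. A saturated cover on $M$ is a set $Q$ of covering relations of $M$ such that (1) for all $x,y$, if $x\,Q\,(x\vee y)$ then $(x\wedge y)\,Q\,y$; (2) for every covering diamond, if three of its four covering relations lie in $Q$, so does the fourth. *)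

theory Defs
  imports Main
begin

definition modular_lattice :: "'a::lattice itself \<Rightarrow> bool" where
  "modular_lattice _ \<longleftrightarrow>
     (\<forall>a b x :: 'a. a \<le> b \<longrightarrow> sup a (inf x b) = inf (sup a x) b)"

definition transfer_system :: "('a::lattice \<times> 'a) set \<Rightarrow> bool" where
  "transfer_system R \<longleftrightarrow>
     (\<forall>x y. (x, y) \<in> R \<longrightarrow> x \<le> y) \<and>
     (\<forall>x. (x, x) \<in> R) \<and>
     (\<forall>x y. (x, y) \<in> R \<and> (y, x) \<in> R \<longrightarrow> x = y) \<and>
     (\<forall>x y z. (x, y) \<in> R \<and> (y, z) \<in> R \<longrightarrow> (x, z) \<in> R) \<and>
     (\<forall>x y z. (x, z) \<in> R \<and> y \<le> z \<longrightarrow> (inf x y, y) \<in> R)"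

definition gen_transfer :: "('a::lattice \<times> 'a) set \<Rightarrow> ('a \<times> 'a) set" where
  "gen_transfer Q = \<Inter> {R. transfer_system R \<and> Q \<subseteq> R}"

definition covers :: "'a::order \<Rightarrow> 'a \<Rightarrow> bool" where
  "covers x y \<longleftrightarrow> x < y \<and> \<not> (\<exists>z. x < z \<and> z < y)"

definition covering_diamond :: "'a::lattice \<Rightarrow> 'a \<Rightarrow> bool" where
  "covering_diamond x y \<longleftrightarrow> x \<noteq> y \<and>
     covers x (sup x y) \<and> covers y (sup x y) \<and>
     covers (inf x y) x \<and> covers (inf x y) y"

definition saturated_cover :: "('a::lattice \<times> 'a) set \<Rightarrow> bool" where
  "saturated_cover Q \<longleftrightarrow>
     (\<forall>x y. (x, y) \<in> Q \<longrightarrow> covers x y) \<and>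
     (\<forall>x y. (x, sup x y) \<in> Q \<longrightarrow> (inf x y, y) \<in> Q) \<and>
     (\<forall>x y. covering_diamond x y \<longrightarrow>
        (let e1 = (inf x y, x) \<in> Q; e2 = (inf x y, y) \<in> Q;
             e3 = (x, sup x y) \<in> Q; e4 = (y, sup x y) \<in> Q
         in (e1 \<and> e2 \<and> e3 \<longrightarrow> e4) \<and> (e1 \<and> e2 \<and> e4 \<longrightarrow> e3) \<and>
            (e1 \<and> e3 \<and> e4 \<longrightarrow> e2) \<and> (e2 \<and> e3 \<and> e4 \<longrightarrow> e1)))"

end

theory Submission
  imports Defs
begin

lemma modlaw:
  assumes "modular_lattice TYPE('a::lattice)" and "(a::'a) \<le> b"
  shows "sup a (inf x b) = inf (sup a x) b"
  using assms unfolding modular_lattice_def by blast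

lemma cover_join:
  fixes u v y :: "'a::lattice"
  assumes M: "modular_lattice TYPE('a)" and c: "covers u v" and nv: "\<not> v \<le> sup u y"
  shows "covers (sup u y) (sup v y)"
proof -
  have uv: "u < v" using c by (simp add: covers_def)
  have lt: "sup u y < sup v y"
    using uv nv by (metis le_sup_iff order.strict_iff_order sup.cobounded1 sup_mono order_refl)
  have "\<not> (sup u y < t \<and> t < sup v y)" for t
  proof
    assume t: "sup u y < t \<and> t < sup v y"
    have ut: "u \<le> inf t v" using t uv by (meson le_inf_iff le_sup_iff less_imp_le order_refl)
    have "inf t v \<le> v" by simp
    hence "inf t v = u \<or> inf t v = v" using c ut unfolding covers_def
      by (metis order.not_eq_order_implies_strict)
    thus False
    proof
      assume "inf t v = u"
      have "sup y (inf v t) = inf (sup y v) t" using modlaw[OF M, of y t v] t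
        by (meson le_sup_iff less_imp_le)
      hence "sup y u = t" using \<open>inf t v = u\<close> t
        by (metis inf.absorb2 inf_commute less_imp_le sup_commute)
      thus False using t by (simp add: sup_commute)
    next
      assume "inf t v = v"
      hence "v \<le> t" by (metis inf.absorb_iff2)
      moreover have "y \<le> t" using t by (meson le_sup_iff less_imp_le)
      ultimately have "sup v y \<le> t" by simp
      thus False using t by (meson order.strict_trans2 order.irrefl)
    qed
  qed
  thus ?thesis using lt by (auto simp: covers_def)
qed

definition good :: "('a::lattice \<times> 'a) set \<Rightarrow> 'a \<Rightarrow> 'a \<Rightarrow> bool" where
  "good Q x z \<longleftrightarrow> (\<forall>a b. x \<le> a \<and> b \<le> z \<and> covers a b \<longrightarrow> (a, b) \<in> Q)"

lemma L1:
  fixes u v y z :: "'a::lattice"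
  assumes M: "modular_lattice TYPE('a)" and S: "saturated_cover Q"
    and g: "good Q y z" and yz: "y \<le> z" and c: "covers u v" and vz: "v \<le> z" and vy: "inf v y \<le> u"
  shows "(u, v) \<in> Q"
proof -
  have uv: "u \<le> v" using c by (simp add: covers_def less_imp_le)
  have eq: "inf (sup u y) v = u"
    using modlaw[OF M uv, of y] vy by (simp add: inf_commute sup.absorb1)
  have nv: "\<not> v \<le> sup u y"
  proof
    assume "v \<le> sup u y"
    hence "inf (sup u y) v = v" by (simp add: inf.absorb2)
    thus False using eq c by (simp add: covers_def)
  qed
  have cv: "covers (sup u y) (sup v y)" using cover_join[OF M c nv] .
  have "sup v y \<le> z" using vz yz by simp
  hence Q1: "(sup u y, sup v y) \<in> Q" using g cv unfolding good_def by auto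
  have "sup (sup u y) v = sup v y" using uv
    by (metis sup.absorb2 sup.assoc sup_commute)
  hence "(sup u y, sup (sup u y) v) \<in> Q" using Q1 by simp
  hence "(inf (sup u y) v, v) \<in> Q" using S unfolding saturated_cover_def by blast
  thus ?thesis using eq by simp
qed

lemma good_sub:
  assumes "good Q x z" "x \<le> y" "w \<le> z" shows "good Q y w"
  using assms unfolding good_def by (meson order_trans)

lemma cov_cases:
  assumes "covers a b" "a \<le> t" "t \<le> b" shows "t = a \<or> t = b"
  using assms unfolding covers_def by (metis order.not_eq_order_implies_strict)

lemma chain_step:
  fixes c d a b y :: "'a::{lattice,finite}"
  assumes M: "modular_lattice TYPE('a)" and S: "saturated_cover Q"
    and cd: "covers c d" and cdQ: "(c, d) \<in> Q"
    and ad: "inf a d = c" and ca: "c \<le> a" and ab: "sup a d = b"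
    and ay: "inf a y = c" and hby: "inf b y = d"
    and P: "\<And>u v. covers u v \<Longrightarrow> v \<le> b \<Longrightarrow> inf v y \<le> u \<Longrightarrow> (u, v) \<in> Q"
  shows "c \<le> e \<Longrightarrow> e \<le> a \<Longrightarrow> (e, sup e d) \<in> Q"
proof (induction e rule: measure_induct_rule[of "\<lambda>e. card {u. u < e}"])
  case (less e)
  have cdle: "c \<le> d" using cd by (simp add: covers_def less_imp_le)
  have cne: "c \<noteq> d" using cd by (auto simp: covers_def)
  have dle: "d \<le> b" using ab by (metis sup.cobounded2)
  have aleb: "a \<le> b" using ab by (metis sup.cobounded1)
  show ?case
  proof (cases "e = c")
    case True
    then show ?thesis using cdQ cdle by (simp add: sup.absorb2)
  next
    case False
    hence ce: "c < e" using less.prems by (simp add: order.not_eq_order_implies_strict)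
    let ?A = "{u. c \<le> u \<and> u < e}"
    have "finite ?A" by simp
    moreover have "c \<in> ?A" using ce by simp
    ultimately obtain e' where e'A: "e' \<in> ?A" and mx: "\<forall>b\<in>?A. e' \<le> b \<longrightarrow> e' = b"
      using finite_has_maximal2 by blast
    have ce': "c \<le> e'" and e'e: "e' < e" using e'A by auto
    have cov: "covers e' e" unfolding covers_def
    proof (intro conjI notI)
      show "e' < e" by fact
    next
      assume "\<exists>t. e' < t \<and> t < e"
      then obtain t where "e' < t" "t < e" by blast
      hence "t \<in> ?A" "e' \<le> t" using ce' by auto
      hence "e' = t" using mx by blast
      thus False using \<open>e' < t\<close> by simp
    qed
    have "{u. u < e'} \<subset> {u. u < e}" using e'e by auto
    hence "card {u. u < e'} < card {u. u < e}" by (simp add: psubset_card_mono)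
    moreover have "e' \<le> a" using e'e less.prems by simp
    ultimately have IH: "(e', sup e' d) \<in> Q" using less.IH ce' by blast
    have ed: "inf e d = c"
    proof (rule order.antisym)
      have "inf e d \<le> inf a d" using less.prems by (intro inf_mono) simp_all
      thus "inf e d \<le> c" using ad by simp
      show "c \<le> inf e d" using ce cdle by (simp add: less_imp_le)
    qed
    have e'd: "inf e' d = c"
    proof (rule order.antisym)
      have "inf e' d \<le> inf e d" using e'e by (intro inf_mono) (simp_all add: less_imp_le)
      thus "inf e' d \<le> c" using ed by simp
      show "c \<le> inf e' d" using ce' cdle by simp
    qed
    have cov1: "covers e (sup e d)"
    proof -
      have "\<not> d \<le> sup c e" using ed cne less.prems
        by (metis inf.absorb2 sup.absorb2)
      hence "covers (sup c e) (sup d e)" using cover_join[OF M cd] by blast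
      thus ?thesis using less.prems by (simp add: sup.absorb2 sup_commute)
    qed
    have cov2: "covers e' (sup e' d)"
    proof -
      have "\<not> d \<le> sup c e'" using e'd cne ce'
        by (metis inf.absorb2 sup.absorb2)
      hence "covers (sup c e') (sup d e')" using cover_join[OF M cd] by blast
      thus ?thesis using ce' by (simp add: sup.absorb2 sup_commute)
    qed
    have ie: "inf e (sup e' d) = e'"
    proof -
      have "sup e' (inf d e) = inf (sup e' d) e" using modlaw[OF M less_imp_le[OF e'e]] .
      moreover have "sup e' (inf d e) = e'" using ed ce' by (simp add: inf_commute sup.absorb1)
      ultimately show ?thesis by (simp add: inf_commute)
    qed
    have cov3: "covers (sup e' d) (sup e d)"
    proof -
      have "\<not> e \<le> sup e' d" using ie e'e by (metis inf.absorb1 order.irrefl)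
      hence "covers (sup e' d) (sup e d)" using cover_join[OF M cov] by blast
      thus ?thesis .
    qed
    have se: "sup e (sup e' d) = sup e d"
      using e'e by (metis less_imp_le sup.absorb1 sup.assoc)
    have neq: "e \<noteq> sup e' d"
    proof
      assume "e = sup e' d"
      hence "d \<le> e" by simp
      thus False using ed cne by (simp add: inf.absorb2)
    qed
    have dia: "covering_diamond e (sup e' d)"
      unfolding covering_diamond_def using neq cov1 cov3 cov cov2 by (simp add: ie se)
    have Q1: "(e', e) \<in> Q"
    proof (rule P[OF cov])
      show "e \<le> b" using less.prems aleb by simp
      have "inf e y \<le> inf a y" using less.prems by (intro inf_mono) simp_all
      thus "inf e y \<le> e'" using ay ce' by simp
    qed
    have Q4: "(sup e' d, sup e d) \<in> Q"
    proof (rule P[OF cov3])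
      show "sup e d \<le> b" using less.prems aleb dle by simp
      have "inf (sup e d) y \<le> inf b y" using less.prems aleb dle by (intro inf_mono) simp_all
      thus "inf (sup e d) y \<le> sup e' d" using hby by (metis le_supI2 order_refl order.trans)
    qed
    have D: "\<forall>x y. covering_diamond x y \<longrightarrow>
        (let e1 = (inf x y, x) \<in> Q; e2 = (inf x y, y) \<in> Q;
             e3 = (x, sup x y) \<in> Q; e4 = (y, sup x y) \<in> Q
         in (e1 \<and> e2 \<and> e3 \<longrightarrow> e4) \<and> (e1 \<and> e2 \<and> e4 \<longrightarrow> e3) \<and>
            (e1 \<and> e3 \<and> e4 \<longrightarrow> e2) \<and> (e2 \<and> e3 \<and> e4 \<longrightarrow> e1))"
      using S unfolding saturated_cover_def by (elim conjE)
    note D1 = D[rule_format, OF dia, unfolded Let_def ie se]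
    show ?thesis using D1 Q1 IH Q4 by blast
  qed
qed

lemma trans_good:
  fixes x y z :: "'a::{lattice,finite}"
  assumes M: "modular_lattice TYPE('a)" and S: "saturated_cover Q"
    and g1: "good Q x y" and g2: "good Q y z" and xy: "x \<le> y" and yz: "y \<le> z"
  shows "good Q x z"
  unfolding good_def
proof (intro allI impI, elim conjE)
  fix a b assume xa: "x \<le> a" and bz: "b \<le> z" and cab: "covers a b"
  have ab: "a \<le> b" using cab by (simp add: covers_def less_imp_le)
  show "(a, b) \<in> Q"
  proof (cases "inf b y \<le> a")
    case True
    then show ?thesis using L1[OF M S g2 yz cab bz] by simp
  next
    case False
    define c where "c = inf a y"
    define d where "d = inf b y"
    have ad: "inf a d = c" unfolding c_def d_def using ab
      by (metis inf.absorb1 inf.assoc)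
    have cd_le: "c \<le> d" unfolding c_def d_def using ab by (intro inf_mono) simp_all
    have dna: "\<not> d \<le> a" using False d_def by simp
    have ca: "c \<le> a" unfolding c_def by simp
    have sab: "sup a d = b"
    proof -
      have "a \<le> sup a d" "sup a d \<le> b" using ab unfolding d_def by auto
      hence "sup a d = a \<or> sup a d = b" using cov_cases[OF cab] by blast
      moreover have "sup a d \<noteq> a" using dna by (metis sup.cobounded2)
      ultimately show ?thesis by blast
    qed
    have ccd: "covers c d" unfolding covers_def
    proof (intro conjI notI)
      show "c < d" using cd_le dna ca by (metis order.not_eq_order_implies_strict)
    next
      assume "\<exists>t. c < t \<and> t < d"
      then obtain t where ct: "c < t" and td: "t < d" by blast
      have "a \<le> sup a t" by simp
      moreover have "sup a t \<le> b" using td ab unfolding d_def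
        by (metis inf.cobounded1 le_supI less_imp_le order.trans)
      ultimately have "sup a t = a \<or> sup a t = b" using cov_cases[OF cab] by blast
      thus False
      proof
        assume "sup a t = a"
        hence "t \<le> a" by (metis sup.cobounded2)
        moreover have "t \<le> y" using td unfolding d_def by (metis inf.cobounded2 less_imp_le order.trans)
        ultimately have "t \<le> c" unfolding c_def by simp
        thus False using ct by (simp add: less_le_not_le)
      next
        assume "sup a t = b"
        have "sup t (inf a d) = inf (sup t a) d" using modlaw[OF M less_imp_le[OF td]] .
        hence "sup t c = inf b d" using ad \<open>sup a t = b\<close> by (simp add: sup_commute)
        moreover have "inf b d = d" unfolding d_def by (simp add: inf.absorb2)
        moreover have "sup t c = t" using ct by (simp add: sup.absorb1 less_imp_le)
        ultimately show False using td by simp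
      qed
    qed
    have cdQ: "(c, d) \<in> Q" using g1 ccd unfolding good_def c_def d_def
      using xa xy by simp
    have P: "\<And>u v. covers u v \<Longrightarrow> v \<le> b \<Longrightarrow> inf v y \<le> u \<Longrightarrow> (u, v) \<in> Q"
      using L1[OF M S g2 yz] bz by (meson order.trans)
    have "(a, sup a d) \<in> Q"
      using chain_step[OF M S ccd cdQ ad ca sab c_def[symmetric] d_def[symmetric] P] ca by simp
    thus ?thesis using sab by simp
  qed
qed

definition TT :: "('a::lattice \<times> 'a) set \<Rightarrow> ('a \<times> 'a) set" where
  "TT Q = {(x, z). x \<le> z \<and> good Q x z}"

lemma TT_ts:
  fixes Q :: "('a::{lattice,finite} \<times> 'a) set"
  assumes M: "modular_lattice TYPE('a)" and S: "saturated_cover Q"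
  shows "transfer_system (TT Q)"
  unfolding transfer_system_def
proof (intro conjI allI impI)
  fix x y assume "(x, y) \<in> TT Q" thus "x \<le> y" by (simp add: TT_def)
next
  fix x
  have "good Q x x" unfolding good_def
  proof (intro allI impI, elim conjE)
    fix a b assume "x \<le> a" "b \<le> x" "covers a b"
    hence "a < a" unfolding covers_def by (meson order.strict_trans2 order.trans)
    thus "(a, b) \<in> Q" by simp
  qed
  thus "(x, x) \<in> TT Q" by (simp add: TT_def)
next
  fix x y assume "(x, y) \<in> TT Q \<and> (y, x) \<in> TT Q" thus "x = y" by (auto simp: TT_def intro: order.antisym)
next
  fix x y z assume "(x, y) \<in> TT Q \<and> (y, z) \<in> TT Q"
  thus "(x, z) \<in> TT Q" unfolding TT_def using trans_good[OF M S] by (auto intro: order.trans)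
next
  fix x y z assume h: "(x, z) \<in> TT Q \<and> y \<le> z"
  hence g: "good Q x z" and xz: "x \<le> z" and yz: "y \<le> z" by (auto simp: TT_def)
  have "good Q (inf x y) y" unfolding good_def
  proof (intro allI impI, elim conjE)
    fix a b assume xa: "inf x y \<le> a" and by': "b \<le> y" and cab: "covers a b"
    have "inf b x \<le> a" using xa by' by (metis inf.cobounded2 inf_commute inf_mono order.trans order_refl)
    thus "(a, b) \<in> Q" using L1[OF M S g xz cab] by' yz by (meson order.trans)
  qed
  thus "(inf x y, y) \<in> TT Q" by (simp add: TT_def)
qed

lemma Q_TT:
  assumes S: "saturated_cover Q" shows "Q \<subseteq> TT Q"
proof
  fix p assume p: "p \<in> Q"
  obtain x z where pe: "p = (x, z)" by force
  have cxz: "covers x z" using S p pe unfolding saturated_cover_def by blast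
  have "good Q x z" unfolding good_def
  proof (intro allI impI, elim conjE)
    fix a b assume h: "x \<le> a" "b \<le> z" "covers a b"
    hence ab: "a < b" by (simp add: covers_def)
    hence az: "a < z" using h(2) by (rule order.strict_trans2)
    have xb: "x < b" using h(1) ab by (rule order.strict_trans1)
    have "a = x \<or> a = z" using cov_cases[OF cxz h(1)] az by (simp add: less_imp_le)
    moreover have "b = x \<or> b = z" using cov_cases[OF cxz _ h(2)] xb by (simp add: less_imp_le)
    ultimately have "a = x \<and> b = z" using az xb by auto
    thus "(a, b) \<in> Q" using p pe by simp
  qed
  thus "p \<in> TT Q" using cxz pe by (simp add: TT_def covers_def less_imp_le)
qed

lemma ts_refl: "transfer_system R \<Longrightarrow> (x, x) \<in> R"
  unfolding transfer_system_def by (elim conjE) (erule allE)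

lemma ts_trans: "transfer_system R \<Longrightarrow> (x, y) \<in> R \<Longrightarrow> (y, z) \<in> R \<Longrightarrow> (x, z) \<in> R"
  unfolding transfer_system_def by (elim conjE) (erule allE, erule allE, erule allE, erule mp, rule conjI)

lemma gen_refl: "(x, x) \<in> gen_transfer Q"
  unfolding gen_transfer_def using ts_refl by blast

lemma TT_gen:
  fixes Q :: "('a::{lattice,finite} \<times> 'a) set"
  shows "x \<le> z \<Longrightarrow> good Q x z \<Longrightarrow> (x, z) \<in> gen_transfer Q"
proof (induction x rule: measure_induct_rule[of "\<lambda>x. card {t. x < t}"])
  case (less x)
  show ?case
  proof (cases "x = z")
    case True
    then show ?thesis using gen_refl by simp
  next
    case False
    hence xz: "x < z" using less.prems by (simp add: order.not_eq_order_implies_strict)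
    let ?A = "{u. x < u \<and> u \<le> z}"
    have "finite ?A" by simp
    moreover have "z \<in> ?A" using xz by simp
    ultimately obtain u where uA: "u \<in> ?A" and mn: "\<forall>b\<in>?A. b \<le> u \<longrightarrow> u = b"
      using finite_has_minimal2 by blast
    have xu: "x < u" and uz: "u \<le> z" using uA by auto
    have cov: "covers x u" unfolding covers_def
    proof (intro conjI notI)
      show "x < u" by fact
    next
      assume "\<exists>t. x < t \<and> t < u"
      then obtain t where "x < t" "t < u" by blast
      hence "t \<in> ?A" "t \<le> u" using uz by auto
      hence "u = t" using mn by blast
      thus False using \<open>t < u\<close> by simp
    qed
    have xuQ: "(x, u) \<in> Q" using less.prems cov uz unfolding good_def by blast
    have "{t. u < t} \<subset> {t. x < t}" using xu by auto
    hence "card {t. u < t} < card {t. x < t}" by (simp add: psubset_card_mono)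
    moreover have "good Q u z" using good_sub[OF less.prems(2)] xu by (simp add: less_imp_le)
    ultimately have uz': "(u, z) \<in> gen_transfer Q" using less.IH uz by blast
    show ?thesis unfolding gen_transfer_def
    proof (intro InterI, elim CollectE conjE)
      fix R :: "('a \<times> 'a) set" assume ts: "transfer_system R" and QR: "Q \<subseteq> R"
      have "(u, z) \<in> R" using uz' ts QR unfolding gen_transfer_def by blast
      moreover have "(x, u) \<in> R" using xuQ QR by blast
      ultimately show "(x, z) \<in> R" using ts_trans[OF ts] by blast
    qed
  qed
qed

theorem lemma3p10:
  fixes Q :: "('a::{lattice,finite} \<times> 'a) set" and x y w z :: 'a
  assumes "modular_lattice TYPE('a)"
    and "saturated_cover Q"
    and "x \<le> y" and "y \<le> w" and "w \<le> z"
    and "(x, z) \<in> gen_transfer Q"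
  shows "(y, w) \<in> gen_transfer Q"
proof -
  have "gen_transfer Q \<subseteq> TT Q"
    unfolding gen_transfer_def using TT_ts[OF assms(1,2)] Q_TT[OF assms(2)] by blast
  hence "good Q x z" using assms(6) by (auto simp: TT_def)
  hence "good Q y w" using good_sub assms by blast
  thus ?thesis using TT_gen assms(4) by blast
qed

end
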